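(* Let $\mathcal{H}$ be a real Hilbert space, let $A\colon \mathcal{H}\rightrightarrows\mathcal{H}$ be maximally monotone and $B\colon\mathcal{H}\to\mathcal{H}$ monotone. Let $\alpha\geq0$ and $\beta,\lambda>0$, put $B':=B-\frac{\alpha}{\lambda}I$ and suppose $B'$ is $L'$-Lipschitz. Let $x\in (A+B)^{-1}(0)$ and, given $x_0,x_{-1}\in\mathcal{H}$, let $$z_{k+1} := J_{\lambda A}\Bigl( x_k - \lambda B(x_k) - \frac{\lambda}{\beta}(B'(x_k)- B'(x_{k-1})) \Bigr),\qquad x_{k+1} := (1-\beta) x_k + \beta z_{k+1}\quad\forall k\in\mathbb{N}.$$ Define $b_k:=2\lambda\langle B(x)-B(x_k),x-x_{k}\rangle$ (so $b_k\geq0$). Then for all $k\in\mathbb{N}$, $$(1-\alpha)\|x_{k+1}-x\|^2 +2\lambda\langle B'(x_{k+1})-B'(x_k),x-x_{k+1}\rangle + b_{k+1} \leq (1-\alpha)\|x_k-x\|^2 + 2\lambda\langle B'(x_k)-B'(x_{k-1}),x-x_k\rangle+ b_k +\frac{\lambda L'}{\beta}\|x_k-x_{k-1}\|^2 -\left(\frac{2-\beta-\lambda L'}{\beta}-\alpha \right) \|x_{k+1}-x_k\|^2.$$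
   Context: $J_{\lambda A}:=(I+\lambda A)^{-1}$ denotes the resolvent; $I$ is the identity. *)

theory Defs
  imports "HOL-Analysis.Analysis"
begin

definition monotone_op :: "('a::real_inner \<Rightarrow> 'a set) \<Rightarrow> bool" where
  "monotone_op A \<longleftrightarrow>
     (\<forall>x y u v. u \<in> A x \<longrightarrow> v \<in> A y \<longrightarrow> inner (u - v) (x - y) \<ge> 0)"

definition graph_op :: "('a \<Rightarrow> 'a set) \<Rightarrow> ('a \<times> 'a) set" where
  "graph_op A = {(x, u). u \<in> A x}"

definition maximal_monotone :: "('a::real_inner \<Rightarrow> 'a set) \<Rightarrow> bool" where
  "maximal_monotone A \<longleftrightarrow> monotone_op A \<and>
     (\<forall>A'. monotone_op A' \<and> graph_op A \<subseteq> graph_op A' \<longrightarrow> graph_op A' = graph_op A)"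

text \<open>Resolvent J_{lam A} = (I + lam A)^{-1}, as a set-valued map:
  z \<in> J y iff y \<in> z + lam A z.\<close>
definition resolvent :: "real \<Rightarrow> ('a::real_vector \<Rightarrow> 'a set) \<Rightarrow> 'a \<Rightarrow> 'a set" where
  "resolvent lam A y = {z. y \<in> (\<lambda>a. z + lam *\<^sub>R a) ` A z}"

end

theory Submission
  imports Defs
begin

theorem lemma4p2:
  fixes A :: "'a::{real_inner, complete_space} \<Rightarrow> 'a set"
    and B :: "'a \<Rightarrow> 'a"
    and \<alpha> \<beta> lam L' :: real
    and x :: 'a
    and xs zs :: "int \<Rightarrow> 'a"
  assumes A_max: "maximal_monotone A"
    and B_mono: "monotone_op (\<lambda>u. {B u})"
    and alpha: "\<alpha> \<ge> 0" and beta: "\<beta> > 0" and lambda: "lam > 0"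
    and B'_lip: "L'-lipschitz_on UNIV (\<lambda>u. B u - (\<alpha> / lam) *\<^sub>R u)"
    and zero: "0 \<in> (\<lambda>a. a + B x) ` A x"
    and z_step: "\<And>k. k \<ge> 0 \<Longrightarrow>
       zs (k + 1) \<in> resolvent lam A
         (xs k - lam *\<^sub>R B (xs k)
            - (lam / \<beta>) *\<^sub>R ((B (xs k) - (\<alpha> / lam) *\<^sub>R xs k)
                            - (B (xs (k - 1)) - (\<alpha> / lam) *\<^sub>R xs (k - 1))))"
    and x_step: "\<And>k. k \<ge> 0 \<Longrightarrow> xs (k + 1) = (1 - \<beta>) *\<^sub>R xs k + \<beta> *\<^sub>R zs (k + 1)"
    and k: "k \<ge> (0::int)"
  shows "let B' = (\<lambda>u. B u - (\<alpha> / lam) *\<^sub>R u);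
             b = (\<lambda>j. 2 * lam * inner (B x - B (xs j)) (x - xs j))
         in (1 - \<alpha>) * (norm (xs (k + 1) - x))\<^sup>2
              + 2 * lam * inner (B' (xs (k + 1)) - B' (xs k)) (x - xs (k + 1)) + b (k + 1)
            \<le> (1 - \<alpha>) * (norm (xs k - x))\<^sup>2
              + 2 * lam * inner (B' (xs k) - B' (xs (k - 1))) (x - xs k) + b k
              + (lam * L' / \<beta>) * (norm (xs k - xs (k - 1)))\<^sup>2
              - ((2 - \<beta> - lam * L') / \<beta> - \<alpha>) * (norm (xs (k + 1) - xs k))\<^sup>2"
proof -
  define B' where "B' = (\<lambda>u. B u - (\<alpha> / lam) *\<^sub>R u)"
  define xk where "xk = xs k"
  define p where "p = xs (k - 1)"
  define xp where "xp = xs (k + 1)"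
  define z where "z = zs (k + 1)"
  define e where "e = xk - x"
  define d where "d = xp - xk"
  define q where "q = B xk - B x"
  define u where "u = B' xk - B' p"
  define s where "s = xk - p"
  define w where "w = xk - lam *\<^sub>R B xk - (lam / \<beta>) *\<^sub>R u"
  obtain a where a: "a \<in> A x" "a + B x = 0" using zero by auto
  have "z \<in> resolvent lam A w" using z_step[OF k] unfolding z_def w_def u_def B'_def xk_def p_def .
  then obtain c where c: "c \<in> A z" "w = z + lam *\<^sub>R c" unfolding resolvent_def by auto
  have monoA: "monotone_op A" using A_max unfolding maximal_monotone_def by blast
  have m1: "inner (c - a) (z - x) \<ge> 0" using monoA c(1) a(1) unfolding monotone_op_def by blast
  have xpeq: "xp = (1 - \<beta>) *\<^sub>R xk + \<beta> *\<^sub>R z" using x_step[OF k] unfolding xp_def xk_def z_def .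
  have zeq: "z = xk + (1/\<beta>) *\<^sub>R d"
  proof -
    have "\<beta> *\<^sub>R z = \<beta> *\<^sub>R (xk + (1/\<beta>) *\<^sub>R d)"
      using beta unfolding d_def xpeq by (simp add: algebra_simps)
    then show ?thesis using beta by simp
  qed
  have ceq: "lam *\<^sub>R c = w - z" using c(2) by simp
  have aeq: "a = - B x" using a(2) by (simp add: eq_neg_iff_add_eq_0)
  have "lam * inner (c - a) (z - x) = inner (lam *\<^sub>R c - lam *\<^sub>R a) (z - x)"
    by (simp add: algebra_simps)
  also have "lam *\<^sub>R c - lam *\<^sub>R a = - (1/\<beta>) *\<^sub>R d - lam *\<^sub>R q - (lam / \<beta>) *\<^sub>R u"
    unfolding ceq aeq w_def zeq q_def by (simp add: algebra_simps)
  also have "z - x = e + (1/\<beta>) *\<^sub>R d" unfolding zeq e_def by simp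
  finally have m2: "0 \<le> inner (- (1/\<beta>) *\<^sub>R d - lam *\<^sub>R q - (lam / \<beta>) *\<^sub>R u) (e + (1/\<beta>) *\<^sub>R d)"
    using m1 lambda \<open>z - x = e + (1/\<beta>) *\<^sub>R d\<close> by (metis mult_nonneg_nonneg less_imp_le)
  define ed where "ed = inner e d"
  define dd where "dd = inner d d"
  define ee where "ee = inner e e"
  define qe where "qe = inner q e"
  define qd where "qd = inner q d"
  define ue where "ue = inner u e"
  define ud where "ud = inner u d"
  define ss where "ss = inner s s"
  have m3: "0 \<le> - (1/\<beta>) * ed - (1/\<beta>) * (1/\<beta>) * dd - lam * qe - lam * (1/\<beta>) * qd
      - (lam / \<beta>) * ue - (lam / \<beta>) * (1/\<beta>) * ud"
    using m2 unfolding ed_def dd_def qe_def qd_def ue_def ud_def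
    by (simp add: inner_simps inner_commute algebra_simps)
  have m4: "0 \<le> -2 * ed - 2 * dd / \<beta> - 2 * lam * \<beta> * qe - 2 * lam * qd - 2 * lam * ue - 2 * lam * ud / \<beta>"
  proof -
    have "0 \<le> (2 * \<beta>) * (- (1/\<beta>) * ed - (1/\<beta>) * (1/\<beta>) * dd - lam * qe - lam * (1/\<beta>) * qd
      - (lam / \<beta>) * ue - (lam / \<beta>) * (1/\<beta>) * ud)" using m3 beta by simp
    also have "\<dots> = -2 * ed - 2 * dd / \<beta> - 2 * lam * \<beta> * qe - 2 * lam * qd - 2 * lam * ue - 2 * lam * ud / \<beta>"
      using beta by (simp add: field_simps)
    finally show ?thesis .
  qed
  have qe0: "qe \<ge> 0" using B_mono unfolding monotone_op_def qe_def q_def e_def by auto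
  have L0: "L' \<ge> 0" using B'_lip lipschitz_on_nonneg by blast
  have nu: "norm u \<le> L' * norm s"
    using lipschitz_onD[OF B'_lip, of xk p] unfolding u_def s_def B'_def by (simp add: dist_norm)
  have "- ud \<le> norm u * norm d" unfolding ud_def
    using Cauchy_Schwarz_ineq2[of u d] by (metis abs_le_iff neg_le_iff_le)
  also have "\<dots> \<le> L' * norm s * norm d" using nu by (simp add: mult_right_mono)
  also have "\<dots> \<le> L' * ((ss + dd) / 2)"
  proof -
    have "norm s * norm d \<le> ((norm s)^2 + (norm d)^2) / 2"
      using sum_squares_bound[of "norm s" "norm d"] by (simp add: power2_eq_square)
    then show ?thesis using L0 unfolding ss_def dd_def
      by (simp add: power2_norm_eq_inner mult_left_mono mult.assoc)
  qed
  finally have udb: "- ud \<le> L' * ((ss + dd) / 2)" .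
  have udb2: "- 2 * lam * ud / \<beta> \<le> lam * L' / \<beta> * (ss + dd)"
  proof -
    have "- 2 * lam * ud / \<beta> = (2 * lam / \<beta>) * (- ud)" by simp
    also have "\<dots> \<le> (2 * lam / \<beta>) * (L' * ((ss + dd) / 2))"
      using udb beta lambda by (intro mult_left_mono) auto
    also have "\<dots> = lam * L' / \<beta> * (ss + dd)" by simp
    finally show ?thesis .
  qed
  have qeb: "0 \<le> 2 * lam * \<beta> * qe" using qe0 beta lambda by simp
  have key: "0 \<le> -2 * ed - 2 * dd / \<beta> - 2 * lam * qd - 2 * lam * ue + lam * L' / \<beta> * (ss + dd)"
    using m4 udb2 qeb by linarith
  have g1: "(norm (xp - x))\<^sup>2 = ee + 2 * ed + dd"
  proof -
    have "xp - x = e + d" unfolding e_def d_def by simp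
    then show ?thesis unfolding ee_def ed_def dd_def power2_norm_eq_inner
      by (simp add: inner_simps inner_commute)
  qed
  have g2: "inner (B' xp - B' xk) (x - xp) + inner (B x - B xp) (x - xp) = qe + qd + (\<alpha>/lam) * (ed + dd)"
  proof -
    have "(B' xp - B' xk) + (B x - B xp) = - (q + (\<alpha>/lam) *\<^sub>R d)"
      unfolding B'_def q_def d_def by (simp add: algebra_simps)
    moreover have "x - xp = - (e + d)" unfolding e_def d_def by simp
    ultimately have "inner (B' xp - B' xk) (x - xp) + inner (B x - B xp) (x - xp)
        = inner (q + (\<alpha>/lam) *\<^sub>R d) (e + d)"
      by (metis inner_add_left inner_minus_left inner_minus_right minus_minus)
    then show ?thesis unfolding qe_def qd_def ed_def dd_def
      by (simp add: inner_simps inner_commute algebra_simps)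
  qed
  have g3: "(norm (xk - x))\<^sup>2 = ee" unfolding ee_def e_def by (simp add: power2_norm_eq_inner)
  have g4: "inner (B' xk - B' p) (x - xk) = - ue" unfolding ue_def u_def e_def
    by (metis inner_minus_right minus_diff_eq)
  have g5: "inner (B x - B xk) (x - xk) = qe" unfolding qe_def q_def e_def
    by (metis inner_minus_left inner_minus_right minus_diff_eq minus_minus)
  have g6: "(norm (xk - p))\<^sup>2 = ss" unfolding ss_def s_def by (simp add: power2_norm_eq_inner)
  have g7: "(norm (xp - xk))\<^sup>2 = dd" unfolding dd_def d_def by (simp add: power2_norm_eq_inner)
  have fin: "(1 - \<alpha>) * (ee + 2 * ed + dd) + 2 * lam * (qe + qd + (\<alpha>/lam) * (ed + dd))
     \<le> (1 - \<alpha>) * ee + 2 * lam * (- ue) + 2 * lam * qe + (lam * L' / \<beta>) * ss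
       - ((2 - \<beta> - lam * L') / \<beta> - \<alpha>) * dd"
  proof -
    have "(1 - \<alpha>) * ee + 2 * lam * (- ue) + 2 * lam * qe + (lam * L' / \<beta>) * ss
       - ((2 - \<beta> - lam * L') / \<beta> - \<alpha>) * dd
       - ((1 - \<alpha>) * (ee + 2 * ed + dd) + 2 * lam * (qe + qd + (\<alpha>/lam) * (ed + dd)))
      = -2 * ed - 2 * dd / \<beta> - 2 * lam * qd - 2 * lam * ue + lam * L' / \<beta> * (ss + dd)"
      using beta lambda by (simp add: field_simps)
    then show ?thesis using key by linarith
  qed
  have lhs: "(1 - \<alpha>) * (norm (xp - x))\<^sup>2 + 2 * lam * inner (B' xp - B' xk) (x - xp)
      + 2 * lam * inner (B x - B xp) (x - xp)
    = (1 - \<alpha>) * (ee + 2 * ed + dd) + 2 * lam * (qe + qd + (\<alpha>/lam) * (ed + dd))"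
    unfolding add.assoc distrib_left[symmetric, of "2 * lam"] g2 g1 ..
  show ?thesis
    unfolding Let_def B'_def[symmetric] xk_def[symmetric] p_def[symmetric] xp_def[symmetric]
    using fin lhs g3 g4 g5 g6 g7 by simp
qed

end
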